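(* Let $n\ge1$, let $f_1,\dots,f_n:\mathbb{R}^d\to\mathbb{R}$ be $L$-smooth (i.e. $\|\nabla f_i(x)-\nabla f_i(y)\|\le L\|x-y\|$ for all $x,y$), and $f=\frac1n\sum_i f_i$. Let $x_0,\dots,x_{T-1}$, $\nabla_0,\dots,\nabla_{T-1}$ and $\gamma_0,\dots,\gamma_{T-1}$ be the iterates, gradient estimators and step-sizes produced by AdaSpider (described in the context) with input $x_0$, $\beta_0>0$, $G_0>0$. Then \[ \mathbb{E}\Big[\sum_{t=0}^{T-1}\gamma_t\|\nabla_t-\nabla f(x_t)\|^2\Big]\le L^2n\,\mathbb{E}\Big[\sum_{t=0}^{T-1}\gamma_t^3\|\nabla_t\|^2\Big]. \]
   Context: $\|\cdot\|$ is the Euclidean norm. AdaSpider: input $x_0\in\mathbb{R}^d$, $\beta_0>0$, $G_0>0$, horizon $T\ge1$. For $t=0,1,\dots,T-1$: if $t \bmod n=0$, set $\nabla_t:=\nabla f(x_t)$; otherwise pick $i_t\in\{1,\dots,n\}$ uniformly at random (independently of the past) and set $\nabla_t:=\nabla f_{i_t}(x_t)-\nabla f_{i_t}(x_{t-1})+\nabla_{t-1}$. Then set $\gamma_t:=1\big/\big(n^{1/4}\beta_0\sqrt{n^{1/2}G_0^2+\sum_{s=0}^t\|\nabla_s\|^2}\big)$ and $x_{t+1}:=x_t-\gamma_t\nabla_t$. *)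

theory Defs
  imports "HOL-Analysis.Analysis" "HOL-Probability.Probability"
begin

definition ada_stepsize :: "nat \<Rightarrow> real \<Rightarrow> real \<Rightarrow> real \<Rightarrow> real" where
  "ada_stepsize n \<beta>0 G0 S = 1 / (root 4 (real n) * \<beta>0 * sqrt (sqrt (real n) * G0\<^sup>2 + S))"

text \<open>State of AdaSpider at time t: (x_t, nabla_t, sum_{s<=t} |nabla_s|^2), for a
  given realisation \<omega> of the random indices (\<omega> t = i_t, used when t mod n \<noteq> 0).
  g i is the gradient of f_i, gF the gradient of f.\<close>
fun ada_state :: "nat \<Rightarrow> (nat \<Rightarrow> 'a::euclidean_space \<Rightarrow> 'a) \<Rightarrow> ('a \<Rightarrow> 'a) \<Rightarrow> 'a \<Rightarrow> real \<Rightarrow> real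
    \<Rightarrow> (nat \<Rightarrow> nat) \<Rightarrow> nat \<Rightarrow> 'a \<times> 'a \<times> real" where
  "ada_state n g gF x0 \<beta>0 G0 \<omega> 0 = (x0, gF x0, (norm (gF x0))\<^sup>2)"
| "ada_state n g gF x0 \<beta>0 G0 \<omega> (Suc t) =
     (let (x, d, S) = ada_state n g gF x0 \<beta>0 G0 \<omega> t;
          x' = x - ada_stepsize n \<beta>0 G0 S *\<^sub>R d;
          d' = (if Suc t mod n = 0 then gF x'
                else g (\<omega> (Suc t)) x' - g (\<omega> (Suc t)) x + d)
      in (x', d', S + (norm d')\<^sup>2))"

definition ada_x where "ada_x n g gF x0 \<beta>0 G0 \<omega> t = fst (ada_state n g gF x0 \<beta>0 G0 \<omega> t)"
definition ada_grad where "ada_grad n g gF x0 \<beta>0 G0 \<omega> t = fst (snd (ada_state n g gF x0 \<beta>0 G0 \<omega> t))"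
definition ada_gamma where
  "ada_gamma n g gF x0 \<beta>0 G0 \<omega> t = ada_stepsize n \<beta>0 G0 (snd (snd (ada_state n g gF x0 \<beta>0 G0 \<omega> t)))"

text \<open>Sample space: index sequences i_0..i_{T-1}, each uniform on {1..n}, independent.\<close>
definition ada_omega :: "nat \<Rightarrow> nat \<Rightarrow> (nat \<Rightarrow> nat) set" where
  "ada_omega n T = PiE {..<T} (\<lambda>_. {1..n})"

end

theory Submission
  imports Defs
begin

lemma ada_state_dep:
  "(\<And>j. j \<le> t \<Longrightarrow> w j = v j) \<Longrightarrow>
   ada_state n g gF x0 b G w t = ada_state n g gF x0 b G v t"
proof (induction t)
  case 0 then show ?case by simp
next
  case (Suc t)
  have "ada_state n g gF x0 b G w t = ada_state n g gF x0 b G v t" using Suc by simp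
  moreover have "w (Suc t) = v (Suc t)" using Suc by simp
  ultimately show ?case by (simp add: Let_def case_prod_beta)
qed

definition ada_S where "ada_S n g gF x0 \<beta>0 G0 w t = snd (snd (ada_state n g gF x0 \<beta>0 G0 w t))"

lemma ada_x_Suc: "ada_x n g gF x0 b G w (Suc t) = ada_x n g gF x0 b G w t - ada_gamma n g gF x0 b G w t *\<^sub>R ada_grad n g gF x0 b G w t"
  by (simp add: ada_x_def ada_gamma_def ada_grad_def Let_def case_prod_beta)

lemma ada_grad_Suc: "ada_grad n g gF x0 b G w (Suc t) = (if Suc t mod n = 0 then gF (ada_x n g gF x0 b G w (Suc t))
   else g (w (Suc t)) (ada_x n g gF x0 b G w (Suc t)) - g (w (Suc t)) (ada_x n g gF x0 b G w t) + ada_grad n g gF x0 b G w t)"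
  by (simp add: ada_x_def ada_gamma_def ada_grad_def Let_def case_prod_beta)

lemma ada_S_Suc: "ada_S n g gF x0 b G w (Suc t) = ada_S n g gF x0 b G w t + (norm (ada_grad n g gF x0 b G w (Suc t)))\<^sup>2"
  by (simp add: ada_S_def ada_grad_def Let_def case_prod_beta)

lemma ada_S_nonneg: "ada_S n g gF x0 b G w t \<ge> 0"
  by (induction t) (auto simp: ada_S_Suc, simp add: ada_S_def)

lemma ada_gamma_S: "ada_gamma n g gF x0 b G w t = ada_stepsize n b G (ada_S n g gF x0 b G w t)"
  by (simp add: ada_gamma_def ada_S_def)

lemma stepsize_pos: "n \<ge> 1 \<Longrightarrow> b > 0 \<Longrightarrow> G > 0 \<Longrightarrow> S \<ge> 0 \<Longrightarrow> ada_stepsize n b G S > 0"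
  unfolding ada_stepsize_def by (intro divide_pos_pos mult_pos_pos real_sqrt_gt_zero add_pos_nonneg) auto

lemma stepsize_mono: "n \<ge> 1 \<Longrightarrow> b > 0 \<Longrightarrow> G > 0 \<Longrightarrow> S \<ge> 0 \<Longrightarrow> S \<le> S' \<Longrightarrow> ada_stepsize n b G S' \<le> ada_stepsize n b G S"
  unfolding ada_stepsize_def
  by (intro divide_left_mono mult_left_mono real_sqrt_le_mono mult_pos_pos real_sqrt_gt_zero add_pos_nonneg) auto

lemma ada_gamma_pos: "n \<ge> 1 \<Longrightarrow> b > 0 \<Longrightarrow> G > 0 \<Longrightarrow> ada_gamma n g gF x0 b G w t > 0"
  by (simp add: ada_gamma_S stepsize_pos ada_S_nonneg)

lemma ada_gamma_mono: "n \<ge> 1 \<Longrightarrow> b > 0 \<Longrightarrow> G > 0 \<Longrightarrow> ada_gamma n g gF x0 b G w (Suc t) \<le> ada_gamma n g gF x0 b G w t"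
  by (simp add: ada_gamma_S stepsize_mono ada_S_nonneg ada_S_Suc)

lemma omega_fiber:
  assumes "v \<in> PiE {..<T} (\<lambda>_. I)" "t < T"
  shows "{u \<in> PiE {..<T} (\<lambda>_. I). \<forall>j. j \<noteq> t \<longrightarrow> u j = v j} = (\<lambda>i. v(t:=i)) ` I"
proof (intro equalityI subsetI)
  fix u assume "u \<in> {u \<in> PiE {..<T} (\<lambda>_. I). \<forall>j. j \<noteq> t \<longrightarrow> u j = v j}"
  then have "u = v(t := u t)" "u t \<in> I" using assms by (auto simp: PiE_iff)
  then show "u \<in> (\<lambda>i. v(t:=i)) ` I" by blast
next
  fix u assume "u \<in> (\<lambda>i. v(t:=i)) ` I"
  then show "u \<in> {u \<in> PiE {..<T} (\<lambda>_. I). \<forall>j. j \<noteq> t \<longrightarrow> u j = v j}"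
    using assms by (auto simp: PiE_iff extensional_def)
qed

lemma avg_sum:
  fixes F :: "(nat \<Rightarrow> 'b) \<Rightarrow> real"
  assumes "t < T" "finite I"
  shows "(\<Sum>w\<in>PiE {..<T} (\<lambda>_. I). \<Sum>i\<in>I. F (w(t:=i))) = real (card I) * (\<Sum>w\<in>PiE {..<T} (\<lambda>_. I). F w)"
proof -
  define \<Omega> where "\<Omega> = PiE {..<T} (\<lambda>_. I)"
  have fin: "finite \<Omega>" unfolding \<Omega>_def using assms by (simp add: finite_PiE)
  have inj: "inj_on (\<lambda>i. v(t:=i)) I" for v :: "nat \<Rightarrow> 'b"
    by (rule inj_onI) (metis fun_upd_same)
  have "(\<Sum>w\<in>\<Omega>. \<Sum>i\<in>I. F (w(t:=i))) = (\<Sum>w\<in>\<Omega>. \<Sum>v\<in>\<Omega>. if (\<forall>j. j \<noteq> t \<longrightarrow> v j = w j) then F v else 0)"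
  proof (rule sum.cong[OF refl])
    fix w assume w: "w \<in> \<Omega>"
    have "(\<Sum>v\<in>\<Omega>. if (\<forall>j. j \<noteq> t \<longrightarrow> v j = w j) then F v else 0)
        = (\<Sum>v\<in>{u\<in>\<Omega>. \<forall>j. j \<noteq> t \<longrightarrow> u j = w j}. F v)"
      using fin by (simp add: sum.inter_filter)
    also have "\<dots> = (\<Sum>v\<in>(\<lambda>i. w(t:=i)) ` I. F v)"
      using omega_fiber[OF w[unfolded \<Omega>_def] assms(1)] unfolding \<Omega>_def by simp
    also have "\<dots> = (\<Sum>i\<in>I. F (w(t:=i)))" by (simp add: sum.reindex[OF inj])
    finally show "(\<Sum>i\<in>I. F (w(t:=i))) = (\<Sum>v\<in>\<Omega>. if (\<forall>j. j \<noteq> t \<longrightarrow> v j = w j) then F v else 0)" by simp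
  qed
  also have "\<dots> = (\<Sum>v\<in>\<Omega>. \<Sum>w\<in>\<Omega>. if (\<forall>j. j \<noteq> t \<longrightarrow> v j = w j) then F v else 0)"
    by (rule sum.swap)
  also have "\<dots> = (\<Sum>v\<in>\<Omega>. real (card I) * F v)"
  proof (rule sum.cong[OF refl])
    fix v assume w: "v \<in> \<Omega>"
    have "(\<Sum>w\<in>\<Omega>. if (\<forall>j. j \<noteq> t \<longrightarrow> v j = w j) then F v else 0)
        = (\<Sum>w\<in>{u\<in>\<Omega>. \<forall>j. j \<noteq> t \<longrightarrow> u j = v j}. F v)"
    proof -
      have e: "{u\<in>\<Omega>. \<forall>j. j \<noteq> t \<longrightarrow> u j = v j} = {w\<in>\<Omega>. \<forall>j. j \<noteq> t \<longrightarrow> v j = w j}" by auto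
      show ?thesis unfolding e using fin by (simp add: sum.inter_filter[symmetric])
    qed
    also have "\<dots> = real (card ((\<lambda>i. v(t:=i)) ` I)) * F v"
      using omega_fiber[OF w[unfolded \<Omega>_def] assms(1)] unfolding \<Omega>_def by simp
    also have "\<dots> = real (card I) * F v" by (simp add: card_image[OF inj])
    finally show "(\<Sum>w\<in>\<Omega>. if (\<forall>j. j \<noteq> t \<longrightarrow> v j = w j) then F v else 0) = real (card I) * F v" .
  qed
  finally show ?thesis unfolding \<Omega>_def by (simp add: sum_distrib_left)
qed


lemma var_bound:
  fixes a :: "nat \<Rightarrow> 'a::real_inner" and e m :: 'a
  assumes fin: "finite I" and cI: "card I = n" and n0: "n > 0"
    and m: "m = (1 / real n) *\<^sub>R (\<Sum>i\<in>I. a i)"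
    and ab: "\<And>i. i \<in> I \<Longrightarrow> norm (a i) \<le> c"
  shows "(\<Sum>i\<in>I. (norm (e + (a i - m)))\<^sup>2) \<le> real n * (norm e)\<^sup>2 + real n * c\<^sup>2"
proof -
  define s where "s = (\<Sum>i\<in>I. a i)"
  have s: "s = real n *\<^sub>R m" using m n0 by (simp add: s_def)
  have "(\<Sum>i\<in>I. (norm (e + (a i - m)))\<^sup>2) = (\<Sum>i\<in>I. inner (e - m) (e - m) + 2 * inner (e - m) (a i) + inner (a i) (a i))"
    by (rule sum.cong) (auto simp: power2_norm_eq_inner inner_add_left inner_add_right inner_diff_left inner_diff_right inner_commute)
  also have "\<dots> = real n * inner (e - m) (e - m) + 2 * inner (e - m) s + (\<Sum>i\<in>I. inner (a i) (a i))"
    by (simp add: sum.distrib cI s_def inner_sum_right sum_distrib_left)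
  also have "\<dots> = real n * (inner e e - inner m m) + (\<Sum>i\<in>I. (norm (a i))\<^sup>2)"
    by (simp add: s power2_norm_eq_inner inner_diff_left inner_diff_right inner_commute algebra_simps)
  also have "\<dots> \<le> real n * inner e e + (\<Sum>i\<in>I. c\<^sup>2)"
  proof -
    have "(\<Sum>i\<in>I. (norm (a i))\<^sup>2) \<le> (\<Sum>i\<in>I. c\<^sup>2)"
      by (rule sum_mono) (meson ab norm_ge_zero power_mono)
    moreover have "0 \<le> real n * inner m m" by simp
    ultimately show ?thesis unfolding right_diff_distrib by linarith
  qed
  also have "\<dots> = real n * (norm e)\<^sup>2 + real n * c\<^sup>2" by (simp add: cI power2_norm_eq_inner)
  finally show ?thesis .
qed

lemma count_sum:
  fixes R :: "nat \<Rightarrow> real"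
  assumes "\<And>s. R s \<ge> 0"
  shows "(\<Sum>t<T. \<Sum>s\<in>{t-n..<t}. R s) \<le> real n * (\<Sum>s<T. R s)"
proof -
  have "(\<Sum>t<T. \<Sum>s\<in>{t-n..<t}. R s) = (\<Sum>t<T. \<Sum>s<T. if t - n \<le> s \<and> s < t then R s else 0)"
  proof (rule sum.cong[OF refl])
    fix t assume t: "t \<in> {..<T}"
    have e: "{s\<in>{..<T}. t - n \<le> s \<and> s < t} = {t-n..<t}" using t by auto
    have "(\<Sum>s\<in>{s\<in>{..<T}. t - n \<le> s \<and> s < t}. R s) = (\<Sum>s<T. if t - n \<le> s \<and> s < t then R s else 0)"
      by (rule sum.inter_filter) simp
    then show "(\<Sum>s\<in>{t-n..<t}. R s) = (\<Sum>s<T. if t - n \<le> s \<and> s < t then R s else 0)"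
      unfolding e .
  qed
  also have "\<dots> = (\<Sum>s<T. \<Sum>t<T. if t - n \<le> s \<and> s < t then R s else 0)" by (rule sum.swap)
  also have "\<dots> = (\<Sum>s<T. real (card {t\<in>{..<T}. t - n \<le> s \<and> s < t}) * R s)"
    by (rule sum.cong[OF refl]) (simp add: sum.inter_filter[symmetric])
  also have "\<dots> \<le> (\<Sum>s<T. real n * R s)"
  proof (rule sum_mono)
    fix s
    have "{t\<in>{..<T}. t - n \<le> s \<and> s < t} \<subseteq> {Suc s..s+n}" by auto
    then have "card {t\<in>{..<T}. t - n \<le> s \<and> s < t} \<le> card {Suc s..s+n}" by (intro card_mono) auto
    then have "card {t\<in>{..<T}. t - n \<le> s \<and> s < t} \<le> n" by simp
    then show "real (card {t\<in>{..<T}. t - n \<le> s \<and> s < t}) * R s \<le> real n * R s"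
      by (intro mult_right_mono) (auto simp: assms)
  qed
  finally show ?thesis by (simp add: sum_distrib_left)
qed

lemma gF_mean:
  fixes f :: "nat \<Rightarrow> 'a::euclidean_space \<Rightarrow> real" and g :: "nat \<Rightarrow> 'a \<Rightarrow> 'a"
  assumes grad_fi: "\<And>i x. i \<in> {1..n} \<Longrightarrow> (f i has_derivative (\<lambda>h. g i x \<bullet> h)) (at x)"
    and F_def: "F = (\<lambda>x. (1 / real n) * (\<Sum>i=1..n. f i x))"
    and grad_F: "\<And>x. (F has_derivative (\<lambda>h. gF x \<bullet> h)) (at x)"
  shows "gF x = (1 / real n) *\<^sub>R (\<Sum>i=1..n. g i x)"
proof -
  define m where "m = (1 / real n) *\<^sub>R (\<Sum>i=1..n. g i x)"
  have "(F has_derivative (\<lambda>h. (1 / real n) * (\<Sum>i=1..n. g i x \<bullet> h))) (at x)"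
    unfolding F_def by (intro has_derivative_mult_right has_derivative_sum grad_fi) auto
  then have eq: "(\<lambda>h. gF x \<bullet> h) = (\<lambda>h. (1 / real n) * (\<Sum>i=1..n. g i x \<bullet> h))"
    using grad_F has_derivative_unique by blast
  have "gF x \<bullet> h = m \<bullet> h" for h
    using fun_cong[OF eq, of h] by (simp add: m_def inner_sum_left)
  then have "(gF x - m) \<bullet> (gF x - m) = 0" by (simp add: inner_diff_left)
  then show ?thesis unfolding m_def[symmetric] by simp
qed


theorem lemma5:
  fixes f :: "nat \<Rightarrow> 'a::euclidean_space \<Rightarrow> real"
    and g :: "nat \<Rightarrow> 'a \<Rightarrow> 'a"
    and F :: "'a \<Rightarrow> real" and gF :: "'a \<Rightarrow> 'a"
    and n T :: nat and L \<beta>0 G0 :: real and x0 :: 'a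
  assumes "n \<ge> 1" and "T \<ge> 1" and "\<beta>0 > 0" and "G0 > 0"
    and grad_fi: "\<And>i x. i \<in> {1..n} \<Longrightarrow> (f i has_derivative (\<lambda>h. g i x \<bullet> h)) (at x)"
    and smooth: "\<And>i x y. i \<in> {1..n} \<Longrightarrow> norm (g i x - g i y) \<le> L * norm (x - y)"
    and F_def: "F = (\<lambda>x. (1 / real n) * (\<Sum>i=1..n. f i x))"
    and grad_F: "\<And>x. (F has_derivative (\<lambda>h. gF x \<bullet> h)) (at x)"
  shows "measure_pmf.expectation (pmf_of_set (ada_omega n T))
           (\<lambda>\<omega>. \<Sum>t<T. ada_gamma n g gF x0 \<beta>0 G0 \<omega> t *
                  (norm (ada_grad n g gF x0 \<beta>0 G0 \<omega> t - gF (ada_x n g gF x0 \<beta>0 G0 \<omega> t)))\<^sup>2)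
       \<le> L\<^sup>2 * real n * measure_pmf.expectation (pmf_of_set (ada_omega n T))
           (\<lambda>\<omega>. \<Sum>t<T. (ada_gamma n g gF x0 \<beta>0 G0 \<omega> t) ^ 3 *
                  (norm (ada_grad n g gF x0 \<beta>0 G0 \<omega> t))\<^sup>2)"
proof -
  note n1 = assms(1) and b0 = assms(3) and G0 = assms(4)
  define X where "X = ada_x n g gF x0 \<beta>0 G0"
  define D where "D = ada_grad n g gF x0 \<beta>0 G0"
  define \<Gamma> where "\<Gamma> = ada_gamma n g gF x0 \<beta>0 G0"
  define \<Omega> where "\<Omega> = ada_omega n T"
  define E where "E = (\<lambda>w t. D w t - gF (X w t))"
  define R where "R = (\<lambda>s. \<Sum>w\<in>\<Omega>. \<Gamma> w s ^ 3 * (norm (D w s))\<^sup>2)"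
  define B where "B = (\<lambda>t. \<Sum>w\<in>\<Omega>. \<Gamma> w t * (norm (E w t))\<^sup>2)"
  have fin: "finite \<Omega>" unfolding \<Omega>_def ada_omega_def by (simp add: finite_PiE)
  have ne: "\<Omega> \<noteq> {}" unfolding \<Omega>_def ada_omega_def using n1 by (simp add: PiE_eq_empty_iff)
  have gpos: "\<Gamma> w t > 0" for w t unfolding \<Gamma>_def using ada_gamma_pos n1 b0 G0 by blast
  have gmono: "\<Gamma> w (Suc t) \<le> \<Gamma> w t" for w t unfolding \<Gamma>_def using ada_gamma_mono n1 b0 G0 by blast
  have Rnn: "R s \<ge> 0" for s unfolding R_def by (intro sum_nonneg mult_nonneg_nonneg zero_le_power less_imp_le[OF gpos]) simp_all
  have mean: "gF x = (1 / real n) *\<^sub>R (\<Sum>i=1..n. g i x)" for x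
    using gF_mean[OF grad_fi F_def grad_F] by blast
  have E0: "E w t = 0" if "t mod n = 0" for w t
  proof (cases t)
    case 0 then show ?thesis by (simp add: E_def D_def X_def ada_grad_def ada_x_def)
  next
    case (Suc t') then show ?thesis using that by (simp add: E_def D_def X_def ada_grad_Suc)
  qed
  have step: "(\<Sum>w\<in>\<Omega>. \<Gamma> w t * (norm (E w (Suc t)))\<^sup>2) \<le> B t + L\<^sup>2 * R t"
    if tT: "Suc t < T" and tn: "Suc t mod n \<noteq> 0" for t
  proof -
    have per: "(\<Sum>i\<in>{1..n}. \<Gamma> (w(Suc t:=i)) t * (norm (E (w(Suc t:=i)) (Suc t)))\<^sup>2)
       \<le> \<Gamma> w t * (real n * (norm (E w t))\<^sup>2 + real n * (L * (\<Gamma> w t * norm (D w t)))\<^sup>2)" for w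
    proof -
      define x where "x = X w t"
      define x' where "x' = X w (Suc t)"
      have same: "ada_state n g gF x0 \<beta>0 G0 (w(Suc t:=i)) t = ada_state n g gF x0 \<beta>0 G0 w t" for i
        by (rule ada_state_dep) auto
      have sX: "X (w(Suc t:=i)) t = x" "D (w(Suc t:=i)) t = D w t" "\<Gamma> (w(Suc t:=i)) t = \<Gamma> w t" for i
        using same[of i] by (simp_all add: X_def D_def \<Gamma>_def x_def ada_x_def ada_grad_def ada_gamma_def)
      have sX': "X (w(Suc t:=i)) (Suc t) = x'" for i
        using sX[of i] by (simp add: X_def D_def \<Gamma>_def x'_def x_def ada_x_Suc)
      have eqE: "E (w(Suc t:=i)) (Suc t) = E w t + ((g i x' - g i x) - (gF x' - gF x))" for i
        using sX[of i] sX'[of i] tn by (simp add: E_def D_def X_def x_def x'_def ada_grad_Suc[of n g gF x0 \<beta>0 G0 "w(Suc t:=i)"] algebra_simps)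
      have m: "gF x' - gF x = (1 / real n) *\<^sub>R (\<Sum>i\<in>{1..n}. g i x' - g i x)"
        by (simp add: mean sum_subtractf scaleR_diff_right)
      have dx: "x' - x = - (\<Gamma> w t *\<^sub>R D w t)"
        by (simp add: x'_def x_def X_def \<Gamma>_def D_def ada_x_Suc)
      have ab: "norm (g i x' - g i x) \<le> L * (\<Gamma> w t * norm (D w t))" if "i \<in> {1..n}" for i
        using smooth[OF that, of x' x] gpos[of w t] by (simp add: dx)
      have "(\<Sum>i\<in>{1..n}. \<Gamma> (w(Suc t:=i)) t * (norm (E (w(Suc t:=i)) (Suc t)))\<^sup>2)
          = \<Gamma> w t * (\<Sum>i\<in>{1..n}. (norm (E w t + ((g i x' - g i x) - (gF x' - gF x))))\<^sup>2)"
        by (simp add: sX eqE sum_distrib_left)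
      also have "\<dots> \<le> \<Gamma> w t * (real n * (norm (E w t))\<^sup>2 + real n * (L * (\<Gamma> w t * norm (D w t)))\<^sup>2)"
        using n1 gpos[of w t]
        by (intro mult_left_mono var_bound[where a = "\<lambda>i. g i x' - g i x", OF _ _ _ m ab]) auto
      finally show ?thesis .
    qed
    have "real n * (\<Sum>w\<in>\<Omega>. \<Gamma> w t * (norm (E w (Suc t)))\<^sup>2)
        = (\<Sum>w\<in>\<Omega>. \<Sum>i\<in>{1..n}. \<Gamma> (w(Suc t:=i)) t * (norm (E (w(Suc t:=i)) (Suc t)))\<^sup>2)"
      using avg_sum[OF tT, of "{1..n}" "\<lambda>w. \<Gamma> w t * (norm (E w (Suc t)))\<^sup>2"]
      by (simp add: \<Omega>_def ada_omega_def)
    also have "\<dots> \<le> (\<Sum>w\<in>\<Omega>. \<Gamma> w t * (real n * (norm (E w t))\<^sup>2 + real n * (L * (\<Gamma> w t * norm (D w t)))\<^sup>2))"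
      by (rule sum_mono) (rule per)
    also have "\<dots> = real n * (B t + L\<^sup>2 * R t)"
      by (simp add: B_def R_def sum_distrib_left sum.distrib power_mult_distrib algebra_simps power3_eq_cube power2_eq_square)
    finally show ?thesis using n1 by simp
  qed
  have Bstep: "B (Suc t) \<le> B t + L\<^sup>2 * R t" if "Suc t < T" "Suc t mod n \<noteq> 0" for t
  proof -
    have "B (Suc t) \<le> (\<Sum>w\<in>\<Omega>. \<Gamma> w t * (norm (E w (Suc t)))\<^sup>2)"
      unfolding B_def by (intro sum_mono mult_right_mono gmono) auto
    then show ?thesis using step[OF that] by linarith
  qed
  have Bind: "t < T \<longrightarrow> B t \<le> L\<^sup>2 * (\<Sum>s\<in>{t - t mod n..<t}. R s)" for t
  proof (induction t)
    case 0 then show ?case by (simp add: B_def E0)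
  next
    case (Suc t)
    show ?case
    proof (cases "Suc t mod n = 0")
      case True then show ?thesis by (simp add: B_def E0)
    next
      case False
      have md: "Suc t mod n = Suc (t mod n)" using False by (simp add: mod_Suc split: if_splits)
      have le: "t - t mod n \<le> t" by simp
      have set: "{Suc t - Suc t mod n..<Suc t} = insert t {t - t mod n..<t}"
        using md le by auto
      show ?thesis
      proof
        assume "Suc t < T"
        then have "B (Suc t) \<le> B t + L\<^sup>2 * R t" using Bstep False by blast
        also have "\<dots> \<le> L\<^sup>2 * (\<Sum>s\<in>{t - t mod n..<t}. R s) + L\<^sup>2 * R t"
          using Suc \<open>Suc t < T\<close> by simp
        also have "\<dots> = L\<^sup>2 * (\<Sum>s\<in>{Suc t - Suc t mod n..<Suc t}. R s)"
          unfolding set by (simp add: algebra_simps)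
        finally show "B (Suc t) \<le> L\<^sup>2 * (\<Sum>s\<in>{Suc t - Suc t mod n..<Suc t}. R s)" .
      qed
    qed
  qed
  have Bn: "B t \<le> L\<^sup>2 * (\<Sum>s\<in>{t - n..<t}. R s)" if "t < T" for t
  proof -
    have "(\<Sum>s\<in>{t - t mod n..<t}. R s) \<le> (\<Sum>s\<in>{t - n..<t}. R s)"
    proof (rule sum_mono2)
      have "t mod n \<le> n" using n1 by (simp add: less_imp_le)
      then show "{t - t mod n..<t} \<subseteq> {t - n..<t}" by auto
    qed (auto simp: Rnn)
    then show ?thesis using Bind[of t] that by (meson order_trans mult_left_mono zero_le_power2)
  qed
  have main: "(\<Sum>t<T. B t) \<le> L\<^sup>2 * real n * (\<Sum>t<T. R t)"
  proof -
    have "(\<Sum>t<T. B t) \<le> (\<Sum>t<T. L\<^sup>2 * (\<Sum>s\<in>{t - n..<t}. R s))"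
      by (rule sum_mono) (simp add: Bn)
    also have "\<dots> = L\<^sup>2 * (\<Sum>t<T. \<Sum>s\<in>{t - n..<t}. R s)" by (simp add: sum_distrib_left)
    also have "\<dots> \<le> L\<^sup>2 * (real n * (\<Sum>s<T. R s))"
      by (intro mult_left_mono count_sum Rnn) simp
    finally show ?thesis by simp
  qed
  have lhs: "measure_pmf.expectation (pmf_of_set \<Omega>) (\<lambda>w. \<Sum>t<T. \<Gamma> w t * (norm (D w t - gF (X w t)))\<^sup>2)
      = (\<Sum>t<T. B t) / real (card \<Omega>)"
    by (subst integral_pmf_of_set[OF ne fin], subst sum.swap) (simp add: B_def E_def)
  have rhs: "measure_pmf.expectation (pmf_of_set \<Omega>) (\<lambda>w. \<Sum>t<T. \<Gamma> w t ^ 3 * (norm (D w t))\<^sup>2)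
      = (\<Sum>t<T. R t) / real (card \<Omega>)"
    by (subst integral_pmf_of_set[OF ne fin], subst sum.swap) (simp add: R_def)
  have cpos: "real (card \<Omega>) > 0" using fin ne by (simp add: card_gt_0_iff)
  have "measure_pmf.expectation (pmf_of_set \<Omega>) (\<lambda>w. \<Sum>t<T. \<Gamma> w t * (norm (D w t - gF (X w t)))\<^sup>2)
     \<le> L\<^sup>2 * real n * measure_pmf.expectation (pmf_of_set \<Omega>) (\<lambda>w. \<Sum>t<T. \<Gamma> w t ^ 3 * (norm (D w t))\<^sup>2)"
    unfolding lhs rhs using main cpos by (simp add: divide_right_mono)
  then show ?thesis unfolding \<Gamma>_def D_def X_def \<Omega>_def .
qed

end
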